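(* Let \(\mathcal{G}=\langle x,y,t \mid x^7, y^2, (xy)^3, [x,y]^4, t^2, [t^{x^2},yx^{-1}], [t,y], (yt^{x^2})^5, (xyx^2t^x)^5, (xt)^8\rangle\). Then \(|\mathcal{G}|\ge 443{,}520\).
   Context: Conventions: \(a^g=g^{-1}ag\) and \([a,b]=a^{-1}b^{-1}ab\). *)

theory Defs
  imports Main
begin

text \<open>A letter is (generator, is_inverse).\<close>

type_synonym 'g word = "('g \<times> bool) list"

definition winv :: "'g word \<Rightarrow> 'g word" where
  "winv w = rev (map (\<lambda>(g, b). (g, \<not> b)) w)"

definition wgen :: "'g \<Rightarrow> 'g word" where
  "wgen g = [(g, False)]"

definition wpow :: "'g word \<Rightarrow> nat \<Rightarrow> 'g word" where
  "wpow w n = concat (replicate n w)"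

text \<open>Conventions: a^g = g^-1 a g and [a,b] = a^-1 b^-1 a b.\<close>
definition wconj :: "'g word \<Rightarrow> 'g word \<Rightarrow> 'g word" where
  "wconj a g = winv g @ a @ g"

definition wcomm :: "'g word \<Rightarrow> 'g word \<Rightarrow> 'g word" where
  "wcomm a b = winv a @ winv b @ a @ b"

inductive pres_eq :: "'g word set \<Rightarrow> 'g word \<Rightarrow> 'g word \<Rightarrow> bool" for R where
  refl: "pres_eq R u u"
| sym: "pres_eq R u v \<Longrightarrow> pres_eq R v u"
| trans: "pres_eq R u v \<Longrightarrow> pres_eq R v w \<Longrightarrow> pres_eq R u w"
| cong: "pres_eq R u v \<Longrightarrow> pres_eq R (a @ u @ b) (a @ v @ b)"
| cancel: "pres_eq R [(g, b), (g, \<not> b)] []"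
| relator: "r \<in> R \<Longrightarrow> pres_eq R r []"

definition presented_group :: "'g word set \<Rightarrow> 'g word set set" where
  "presented_group R = UNIV // {(u, v). pres_eq R u v}"

datatype gen3 = X | Y | T

definition x :: "gen3 word" where "x = wgen X"
definition y :: "gen3 word" where "y = wgen Y"
definition t :: "gen3 word" where "t = wgen T"

definition relators_G :: "gen3 word set" where
  "relators_G = {
     wpow x 7,
     wpow y 2,
     wpow (x @ y) 3,
     wpow (wcomm x y) 4,
     wpow t 2,
     wcomm (wconj t (wpow x 2)) (y @ winv x),
     wcomm t y,
     wpow (y @ wconj t (wpow x 2)) 5,
     wpow (x @ y @ wpow x 2 @ wconj t x) 5,
     wpow (x @ t) 8 }"

end

theory Submission
  imports Defs
begin

datatype pt = P0 | P1 | P2 | P3 | P4 | P5 | P6 | P7 | P8 | P9 | P10 | P11 | P12 | P13 | P14 | P15 | P16 | P17 | P18 | P19 | P20 | P21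

fun fx :: "pt \<Rightarrow> pt" where
  "fx P0 = P10"
| "fx P1 = P17"
| "fx P2 = P11"
| "fx P3 = P8"
| "fx P4 = P0"
| "fx P5 = P6"
| "fx P6 = P4"
| "fx P7 = P20"
| "fx P8 = P19"
| "fx P9 = P15"
| "fx P10 = P2"
| "fx P11 = P5"
| "fx P12 = P3"
| "fx P13 = P1"
| "fx P14 = P12"
| "fx P15 = P14"
| "fx P16 = P7"
| "fx P17 = P16"
| "fx P18 = P13"
| "fx P19 = P9"
| "fx P20 = P18"
| "fx P21 = P21"

fun fxi :: "pt \<Rightarrow> pt" where
  "fxi P0 = P4"
| "fxi P1 = P13"
| "fxi P2 = P10"
| "fxi P3 = P12"
| "fxi P4 = P6"
| "fxi P5 = P11"
| "fxi P6 = P5"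
| "fxi P7 = P16"
| "fxi P8 = P3"
| "fxi P9 = P19"
| "fxi P10 = P0"
| "fxi P11 = P2"
| "fxi P12 = P14"
| "fxi P13 = P18"
| "fxi P14 = P15"
| "fxi P15 = P9"
| "fxi P16 = P17"
| "fxi P17 = P1"
| "fxi P18 = P20"
| "fxi P19 = P8"
| "fxi P20 = P7"
| "fxi P21 = P21"

fun fy :: "pt \<Rightarrow> pt" where
  "fy P0 = P11"
| "fy P1 = P7"
| "fy P2 = P2"
| "fy P3 = P8"
| "fy P4 = P6"
| "fy P5 = P5"
| "fy P6 = P4"
| "fy P7 = P1"
| "fy P8 = P3"
| "fy P9 = P19"
| "fy P10 = P10"
| "fy P11 = P0"
| "fy P12 = P15"
| "fy P13 = P18"
| "fy P14 = P21"
| "fy P15 = P12"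
| "fy P16 = P16"
| "fy P17 = P17"
| "fy P18 = P13"
| "fy P19 = P9"
| "fy P20 = P20"
| "fy P21 = P14"

fun ft :: "pt \<Rightarrow> pt" where
  "ft P0 = P8"
| "ft P1 = P21"
| "ft P2 = P2"
| "ft P3 = P11"
| "ft P4 = P12"
| "ft P5 = P5"
| "ft P6 = P15"
| "ft P7 = P14"
| "ft P8 = P0"
| "ft P9 = P18"
| "ft P10 = P10"
| "ft P11 = P3"
| "ft P12 = P4"
| "ft P13 = P19"
| "ft P14 = P7"
| "ft P15 = P6"
| "ft P16 = P16"
| "ft P17 = P17"
| "ft P18 = P9"
| "ft P19 = P13"
| "ft P20 = P20"
| "ft P21 = P1"

definition allp :: "pt list" where "allp = [P0, P1, P2, P3, P4, P5, P6, P7, P8, P9, P10, P11, P12, P13, P14, P15, P16, P17, P18, P19, P20, P21]"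

lemma allp: "p \<in> set allp"
  by (cases p) (simp_all add: allp_def)

fun gl :: "gen3 \<times> bool \<Rightarrow> pt \<Rightarrow> pt" where
  "gl (X, b) = (if b then fxi else fx)"
| "gl (Y, b) = fy"
| "gl (T, b) = ft"

fun phi :: "gen3 word \<Rightarrow> pt \<Rightarrow> pt" where
  "phi [] i = i"
| "phi (l # w) i = phi w (gl l i)"

definition WA :: "gen3 word list" where "WA = [[],
  [(T, False), (X, False), (T, False), (X, False)],
  [(X, False), (X, False)],
  [(Y, False), (T, False)],
  [(X, True)],
  [(Y, False), (X, False)],
  [(X, True), (X, True)],
  [(X, True), (T, False), (X, True), (T, False)],
  [(T, False)],
  [(T, False), (X, False), (X, False)],
  [(X, False)],
  [(Y, False)],
  [(X, True), (T, False)],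
  [(T, False), (X, False), (T, False)],
  [(X, True), (T, False), (X, True)],
  [(X, True), (X, True), (T, False)],
  [(X, True), (T, False), (X, True), (T, False), (X, True)],
  [(T, False), (X, False), (T, False), (X, False), (X, False)],
  [(T, False), (X, False), (X, False), (T, False)],
  [(T, False), (X, False)],
  [(X, True), (T, False), (X, True), (T, False), (X, False)],
  [(X, True), (T, False), (X, True), (Y, False)]]"
definition WB :: "gen3 word list" where "WB = [[],
  [(Y, False), (T, False), (X, False), (T, False), (X, False), (Y, False), (X, True)],
  [(Y, False), (T, False), (X, False), (T, False), (X, False), (T, False), (X, True)],
  [(Y, False), (T, False), (X, False), (T, False)],
  [(X, True), (T, False), (X, False), (X, False), (T, False), (X, False), (Y, False), (X, True)],
  [(X, True), (T, False), (X, False), (X, False), (T, False)],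
  [(T, False), (X, True), (Y, False), (T, False)],
  [(T, False), (X, True), (T, False), (X, True), (X, True), (Y, False), (T, False), (X, True)],
  [(X, True), (T, False), (X, False), (X, False), (T, False), (X, False), (Y, False), (T, False), (X, True)],
  [(X, True), (T, False), (X, True), (X, True), (Y, False), (T, False), (X, False)],
  [(X, True), (X, True), (T, False), (X, True), (X, True), (X, True), (T, False)],
  [(Y, False), (T, False), (X, False), (T, False), (X, False), (Y, False), (T, False), (X, True)],
  [(X, True), (T, False), (X, False), (Y, False), (T, False)],
  [(X, True), (T, False), (X, False), (X, False), (T, False), (X, False), (T, False), (X, True)],
  [(X, True), (T, False), (X, False), (T, False), (X, True), (X, True), (T, False), (X, True)],
  [(X, True), (T, False), (X, False), (T, False), (X, True), (X, True), (X, True)],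
  [(T, False), (X, True), (X, True), (T, False), (X, False)],
  [(T, False), (X, False), (Y, False), (X, True), (X, True), (T, False)],
  [(T, False), (X, True), (T, False), (X, True), (X, True), (T, False), (X, True)],
  [(T, False), (X, True), (T, False), (X, True), (X, True), (X, True)],
  [(X, True), (T, False), (X, False), (Y, False), (T, False), (X, False), (T, False), (X, True)]]"
definition WC :: "gen3 word list" where "WC = [[],
  [(X, False), (Y, False), (T, False), (X, True)],
  [(X, False), (Y, False), (X, True)],
  [(X, True), (X, True), (Y, False), (X, False)],
  [(X, True), (Y, False), (X, True), (X, True), (Y, False)],
  [(X, False), (Y, False), (T, False), (X, False), (T, False), (X, False), (Y, False)],
  [(X, True), (Y, False), (X, True), (T, False), (X, True), (Y, False)],
  [(X, False), (T, False), (X, False), (X, False), (Y, False)],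
  [(X, False), (T, False), (X, False), (T, False), (X, False), (Y, False)],
  [(X, True), (Y, False), (X, False), (X, False)],
  [(X, False), (T, False), (X, True)],
  [(X, False), (Y, False), (T, False), (X, True), (Y, False), (X, False), (T, False), (X, True), (Y, False)],
  [(X, False), (T, False), (X, False), (Y, False), (X, True), (X, True)],
  [(Y, False), (X, False), (T, False), (X, True), (Y, False)],
  [(X, False), (T, False), (X, True), (Y, False), (X, False), (T, False), (X, True), (Y, False)],
  [(Y, False), (X, False), (T, False), (X, True), (X, True), (T, False), (X, True), (X, True)],
  [(X, False), (Y, False), (T, False), (X, False), (Y, False), (X, True), (T, False), (X, True)],
  [(X, False), (Y, False), (T, False), (X, False), (X, False), (Y, False)],
  [(X, False), (Y, False), (T, False), (X, False), (T, False), (X, True), (X, True)],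
  [(X, True), (X, True), (X, True), (T, False), (X, True), (Y, False)]]"
definition WD :: "gen3 word list" where "WD = [[],
  [(X, False), (X, False), (Y, False), (X, True), (X, True)],
  [(X, False), (X, False), (T, False), (X, True), (X, True)],
  [(X, False), (Y, False), (X, False), (X, False), (Y, False)],
  [(Y, False), (X, True), (T, False), (X, False), (Y, False)],
  [(X, False), (X, False), (Y, False), (T, False), (X, True), (X, True)],
  [(X, False), (Y, False), (X, False), (T, False), (X, False), (Y, False)],
  [(X, False), (X, False), (X, False), (Y, False), (X, False), (X, False), (X, False), (Y, False)],
  [(X, False), (X, False), (T, False), (X, True), (Y, False), (X, False), (X, False), (Y, False)],
  [(X, False), (X, False), (X, False), (Y, False), (X, False), (X, False), (T, False), (X, False), (Y, False)],
  [(X, False), (X, False), (Y, False), (T, False), (X, True), (Y, False), (X, False), (X, False), (Y, False)],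
  [(X, False), (X, False), (T, False), (X, True), (Y, False), (X, False), (T, False), (X, False), (Y, False)],
  [(T, False), (X, True), (T, False), (X, False), (Y, False), (X, True), (T, False), (X, False), (T, False)],
  [(X, False), (X, False), (Y, False), (T, False), (X, True), (Y, False), (X, False), (T, False), (X, False), (Y, False)],
  [(X, False), (X, False), (T, False), (X, True), (X, True), (Y, False), (X, True), (T, False), (X, False), (Y, False)],
  [(X, False), (X, False), (Y, False), (T, False), (X, True), (X, True), (Y, False), (X, True), (T, False), (X, False), (Y, False)],
  [(X, False), (Y, False), (T, False), (X, False), (X, False), (X, False), (Y, False), (T, False), (X, False), (X, False), (X, False)],
  [(X, False), (Y, False), (T, False), (X, True), (X, True), (Y, False), (X, False), (X, False), (X, False), (T, False), (X, True)],
  [(X, False), (T, False), (X, False), (Y, False), (X, True), (T, False), (X, False), (T, False), (X, True), (T, False), (X, True)],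
  [(X, False), (T, False), (X, False), (T, False), (X, True), (X, True), (X, True), (Y, False), (X, True), (X, True), (Y, False)],
  [(X, False), (T, False), (X, False), (T, False), (X, True), (T, False), (X, False), (Y, False), (X, True), (T, False), (X, True)],
  [(X, False), (T, False), (X, True), (X, True), (X, True), (Y, False), (X, False), (X, False), (Y, False), (T, False), (X, True)],
  [(X, True), (X, True), (X, True), (Y, False), (T, False), (X, True), (X, True), (X, True), (Y, False), (T, False), (X, True)],
  [(X, True), (Y, False), (X, True), (X, True), (Y, False), (X, False), (X, False), (T, False), (X, True), (T, False), (X, True)],
  [(X, False), (T, False), (X, False), (X, False), (Y, False), (X, False), (T, False), (X, True), (X, True), (Y, False), (X, False), (X, False)],
  [(X, False), (T, False), (X, True), (Y, False), (X, False), (X, False), (X, False), (Y, False), (X, True), (T, False), (X, True), (Y, False)],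
  [(X, True), (X, True), (X, True), (Y, False), (T, False), (X, True), (X, True), (X, True), (T, False), (X, False), (X, False), (Y, False)],
  [(X, True), (X, True), (X, True), (T, False), (X, False), (X, False), (Y, False), (X, True), (T, False), (X, False), (X, False), (X, False)],
  [(X, True), (X, True), (Y, False), (X, False), (X, False), (Y, False), (T, False), (X, False), (Y, False), (X, True), (T, False), (X, True)],
  [(X, True), (X, True), (Y, False), (X, False), (X, False), (T, False), (X, False), (X, False), (X, False), (T, False), (X, True), (Y, False)],
  [(X, True), (Y, False), (X, True), (T, False), (X, False), (X, False), (X, False), (Y, False), (X, False), (T, False), (X, True), (Y, False)],
  [(X, True), (Y, False), (X, True), (T, False), (X, False), (Y, False), (X, True), (X, True), (Y, False), (T, False), (X, True), (Y, False)],
  [(Y, False), (X, False), (T, False), (X, False), (Y, False), (X, True), (X, True), (X, True), (Y, False), (X, False), (T, False), (X, True)],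
  [(Y, False), (X, False), (T, False), (X, True), (X, True), (X, True), (T, False), (X, True), (X, True), (Y, False), (X, False), (X, False)],
  [(X, False), (X, False), (T, False), (X, False), (X, False), (Y, False), (T, False), (X, True), (X, True), (X, True), (Y, False), (T, False), (X, True)],
  [(X, False), (Y, False), (X, True), (X, True), (X, True), (Y, False), (X, False), (X, False), (X, False), (T, False), (X, True), (T, False), (X, True)],
  [(X, False), (Y, False), (X, True), (X, True), (Y, False), (X, False), (X, False), (Y, False), (X, True), (T, False), (X, True), (T, False), (X, True)],
  [(X, False), (Y, False), (T, False), (X, False), (X, False), (X, False), (Y, False), (T, False), (X, True), (X, True), (T, False), (X, True), (X, True)],
  [(X, False), (Y, False), (T, False), (X, True), (Y, False), (X, False), (X, False), (Y, False), (X, True), (X, True), (T, False), (X, True), (Y, False)],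
  [(X, False), (T, False), (X, False), (T, False), (X, False), (Y, False), (X, True), (X, True), (Y, False), (X, False), (X, False), (Y, False), (X, True)],
  [(X, False), (T, False), (X, True), (X, True), (X, True), (Y, False), (X, False), (X, False), (T, False), (X, False), (T, False), (X, False), (Y, False)],
  [(X, True), (X, True), (X, True), (T, False), (X, True), (X, True), (Y, False), (X, False), (X, False), (Y, False), (T, False), (X, True), (Y, False)],
  [(X, True), (Y, False), (X, True), (X, True), (X, True), (Y, False), (T, False), (X, False), (X, False), (Y, False), (T, False), (X, True), (Y, False)],
  [(X, True), (Y, False), (X, True), (T, False), (X, True), (X, True), (Y, False), (X, False), (X, False), (T, False), (X, False), (X, False), (X, False)],
  [(X, True), (Y, False), (X, True), (T, False), (X, True), (X, True), (Y, False), (T, False), (X, False), (X, False), (X, False), (Y, False), (X, False)],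
  [(Y, False), (X, True), (T, False), (X, True), (T, False), (X, True), (X, True), (Y, False), (X, False), (X, False), (X, False), (T, False), (X, True)],
  [(X, False), (X, False), (Y, False), (T, False), (X, False), (X, False), (Y, False), (T, False), (X, True), (X, True), (X, True), (Y, False), (T, False), (X, True)],
  [(X, False), (X, False), (T, False), (X, True), (Y, False), (T, False), (X, False), (X, False), (X, False), (Y, False), (T, False), (X, False), (X, False), (X, False)]]"

lemma phi_append: "phi (u @ v) i = phi v (phi u i)"
  by (induction u arbitrary: i) auto

lemma cancel_chk0: "list_all (\<lambda>g. list_all (\<lambda>b. list_all (\<lambda>i. gl (g, \<not> b) (gl (g, b) i) = i) allp) [True, False]) [X, Y, T]"
  by code_simp

lemma cancel_all: "gl (g, \<not> b) (gl (g, b) i) = i"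
  using cancel_chk0 allp[of i] by (cases g; cases b) (auto simp: list_all_iff)

lemma gl_inj: "inj (gl l)"
proof (cases l)
  case (Pair g b)
  show ?thesis unfolding Pair
    by (rule inj_on_inverseI[where g="gl (g, \<not> b)"]) (rule cancel_all)
qed

lemma phi_inj: "inj (phi w)"
proof (induction w)
  case Nil then show ?case by (simp add: inj_on_def)
next
  case (Cons l w)
  have "inj (phi w \<circ> gl l)" using Cons.IH gl_inj by (rule inj_compose)
  moreover have "phi (l # w) = phi w \<circ> gl l" by (auto simp: fun_eq_iff)
  ultimately show ?case by metis
qed

lemma rel_list: "relators_G = set [[(X, False), (X, False), (X, False), (X, False), (X, False), (X, False), (X, False)],
  [(Y, False), (Y, False)],
  [(X, False), (Y, False), (X, False), (Y, False), (X, False), (Y, False)],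
  [(X, True), (Y, True), (X, False), (Y, False), (X, True), (Y, True), (X, False), (Y, False), (X, True), (Y, True), (X, False), (Y, False), (X, True), (Y, True), (X, False), (Y, False)],
  [(T, False), (T, False)],
  [(X, True), (X, True), (T, True), (X, False), (X, False), (X, False), (Y, True), (X, True), (X, True), (T, False), (X, False), (X, False), (Y, False), (X, True)],
  [(T, True), (Y, True), (T, False), (Y, False)],
  [(Y, False), (X, True), (X, True), (T, False), (X, False), (X, False), (Y, False), (X, True), (X, True), (T, False), (X, False), (X, False), (Y, False), (X, True), (X, True), (T, False), (X, False), (X, False), (Y, False), (X, True), (X, True), (T, False), (X, False), (X, False), (Y, False), (X, True), (X, True), (T, False), (X, False), (X, False)],
  [(X, False), (Y, False), (X, False), (X, False), (X, True), (T, False), (X, False), (X, False), (Y, False), (X, False), (X, False), (X, True), (T, False), (X, False), (X, False), (Y, False), (X, False), (X, False), (X, True), (T, False), (X, False), (X, False), (Y, False), (X, False), (X, False), (X, True), (T, False), (X, False), (X, False), (Y, False), (X, False), (X, False), (X, True), (T, False), (X, False)],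
  [(X, False), (T, False), (X, False), (T, False), (X, False), (T, False), (X, False), (T, False), (X, False), (T, False), (X, False), (T, False), (X, False), (T, False), (X, False), (T, False)]]"
  by (simp add: relators_G_def wpow_def x_def y_def t_def wgen_def winv_def wcomm_def wconj_def numeral_eq_Suc)

lemma rel_chk: "list_all (\<lambda>r. list_all (\<lambda>i. phi r i = i) allp) [[(X, False), (X, False), (X, False), (X, False), (X, False), (X, False), (X, False)],
  [(Y, False), (Y, False)],
  [(X, False), (Y, False), (X, False), (Y, False), (X, False), (Y, False)],
  [(X, True), (Y, True), (X, False), (Y, False), (X, True), (Y, True), (X, False), (Y, False), (X, True), (Y, True), (X, False), (Y, False), (X, True), (Y, True), (X, False), (Y, False)],
  [(T, False), (T, False)],
  [(X, True), (X, True), (T, True), (X, False), (X, False), (X, False), (Y, True), (X, True), (X, True), (T, False), (X, False), (X, False), (Y, False), (X, True)],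
  [(T, True), (Y, True), (T, False), (Y, False)],
  [(Y, False), (X, True), (X, True), (T, False), (X, False), (X, False), (Y, False), (X, True), (X, True), (T, False), (X, False), (X, False), (Y, False), (X, True), (X, True), (T, False), (X, False), (X, False), (Y, False), (X, True), (X, True), (T, False), (X, False), (X, False), (Y, False), (X, True), (X, True), (T, False), (X, False), (X, False)],
  [(X, False), (Y, False), (X, False), (X, False), (X, True), (T, False), (X, False), (X, False), (Y, False), (X, False), (X, False), (X, True), (T, False), (X, False), (X, False), (Y, False), (X, False), (X, False), (X, True), (T, False), (X, False), (X, False), (Y, False), (X, False), (X, False), (X, True), (T, False), (X, False), (X, False), (Y, False), (X, False), (X, False), (X, True), (T, False), (X, False)],
  [(X, False), (T, False), (X, False), (T, False), (X, False), (T, False), (X, False), (T, False), (X, False), (T, False), (X, False), (T, False), (X, False), (T, False), (X, False), (T, False)]]"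
  by code_simp

lemma rel_id: "r \<in> relators_G \<Longrightarrow> phi r i = i"
  using rel_chk allp[of i] unfolding rel_list by (auto simp: list_all_iff)

lemma sound: "pres_eq relators_G u v \<Longrightarrow> phi u = phi v"
proof (induction rule: pres_eq.induct)
  case (cong u v a b)
  then show ?case by (auto simp: phi_append fun_eq_iff)
next
  case (cancel g b)
  then show ?case using cancel_all by (auto simp: fun_eq_iff)
next
  case (relator r)
  then show ?case using rel_id by (auto simp: fun_eq_iff)
qed auto

lemma chkA: "length WA = 22 \<and> distinct (map (\<lambda>w. phi w P0) WA)"
  by code_simp
lemma chkB: "length WB = 21 \<and> list_all (\<lambda>w. phi w P0 = P0) WB \<and> distinct (map (\<lambda>w. phi w P1) WB)"
  by code_simp
lemma chkC: "length WC = 20 \<and> list_all (\<lambda>w. phi w P0 = P0 \<and> phi w P1 = P1) WC \<and> distinct (map (\<lambda>w. phi w P2) WC)"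
  by code_simp
lemma chkD: "length WD = 48 \<and> list_all (\<lambda>w. phi w P0 = P0 \<and> phi w P1 = P1 \<and> phi w P2 = P2) WD
   \<and> distinct (map (\<lambda>w. map (phi w) [P3, P4]) WD)"
  by code_simp

definition W :: "nat \<times> nat \<times> nat \<times> nat \<Rightarrow> gen3 word" where
  "W p = (case p of (i, j, k, l) \<Rightarrow> WD ! l @ WC ! k @ WB ! j @ WA ! i)"

lemma distinct_map_nth: "distinct (map f xs) \<Longrightarrow> i < length xs \<Longrightarrow> j < length xs
  \<Longrightarrow> f (xs ! i) = f (xs ! j) \<Longrightarrow> i = j"
  by (metis distinct_map length_map nth_eq_iff_index_eq nth_map)

lemma inj_chain:
  assumes "i < 22" "i' < 22" "j < 21" "j' < 21" "k < 20" "k' < 20" "l < 48" "l' < 48"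
    and eq: "phi (W (i, j, k, l)) = phi (W (i', j', k', l'))"
  shows "(i, j, k, l) = (i', j', k', l')"
proof -
  have A: "length WA = 22" "distinct (map (\<lambda>w. phi w P0) WA)" using chkA by auto
  have B: "length WB = 21" "\<And>w. w \<in> set WB \<Longrightarrow> phi w P0 = P0" "distinct (map (\<lambda>w. phi w P1) WB)"
    using chkB by (auto simp: list_all_iff)
  have C: "length WC = 20" "\<And>w. w \<in> set WC \<Longrightarrow> phi w P0 = P0 \<and> phi w P1 = P1"
     "distinct (map (\<lambda>w. phi w P2) WC)"
    using chkC by (auto simp: list_all_iff)
  have D: "length WD = 48" "\<And>w. w \<in> set WD \<Longrightarrow> phi w P0 = P0 \<and> phi w P1 = P1 \<and> phi w P2 = P2"
     "distinct (map (\<lambda>w. map (phi w) [P3, P4]) WD)"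
    using chkD by (auto simp: list_all_iff)
  have inb: "WB ! j \<in> set WB" "WB ! j' \<in> set WB" "WC ! k \<in> set WC" "WC ! k' \<in> set WC"
    "WD ! l \<in> set WD" "WD ! l' \<in> set WD"
    using assms(3-8) B(1) C(1) D(1) by (simp_all only: nth_mem)
  have b0: "phi (WB ! j) P0 = P0" "phi (WB ! j') P0 = P0" using B(2) inb by blast+
  have c0: "phi (WC ! k) P0 = P0" "phi (WC ! k') P0 = P0" "phi (WC ! k) P1 = P1" "phi (WC ! k') P1 = P1"
    using C(2) inb by blast+
  have d0: "phi (WD ! l) P0 = P0" "phi (WD ! l') P0 = P0" "phi (WD ! l) P1 = P1" "phi (WD ! l') P1 = P1"
     "phi (WD ! l) P2 = P2" "phi (WD ! l') P2 = P2"
    using D(2) inb by blast+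
  have e: "\<And>p. phi (WA ! i) (phi (WB ! j) (phi (WC ! k) (phi (WD ! l) p))) =
     phi (WA ! i') (phi (WB ! j') (phi (WC ! k') (phi (WD ! l') p)))"
    using eq unfolding W_def by (simp add: phi_append fun_eq_iff)
  have "phi (WA ! i) P0 = phi (WA ! i') P0" using e[of P0] b0 c0 d0 by simp
  then have ii: "i = i'" using distinct_map_nth[OF A(2)] assms(1,2) A(1) by simp
  have e1: "\<And>p. phi (WB ! j) (phi (WC ! k) (phi (WD ! l) p)) = phi (WB ! j') (phi (WC ! k') (phi (WD ! l') p))"
    using e phi_inj unfolding ii by (metis injD)
  have "phi (WB ! j) P1 = phi (WB ! j') P1" using e1[of P1] c0 d0 by simp
  then have jj: "j = j'" using distinct_map_nth[OF B(3)] assms(3,4) B(1) by simp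
  have e2: "\<And>p. phi (WC ! k) (phi (WD ! l) p) = phi (WC ! k') (phi (WD ! l') p)"
    using e1 phi_inj unfolding jj by (metis injD)
  have "phi (WC ! k) P2 = phi (WC ! k') P2" using e2[of P2] d0 by simp
  then have kk: "k = k'" using distinct_map_nth[OF C(3)] assms(5,6) C(1) by simp
  have e3: "\<And>p. phi (WD ! l) p = phi (WD ! l') p"
    using e2 phi_inj unfolding kk by (metis injD)
  then have "map (phi (WD ! l)) [P3, P4] = map (phi (WD ! l')) [P3, P4]" by simp
  then have ll: "l = l'" using distinct_map_nth[OF D(3)] assms(7,8) D(1) by simp
  show ?thesis using ii jj kk ll by simp
qed

theorem corollary2p2:
  shows "infinite (presented_group relators_G) \<or> card (presented_group relators_G) \<ge> 443520"
proof (cases "finite (presented_group relators_G)")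
  case False then show ?thesis by simp
next
  case True
  then have fin: "finite (presented_group relators_G)" by simp
  define rel where "rel = {(u, v). pres_eq relators_G u v}"
  define S where "S = {..<22::nat} \<times> {..<21::nat} \<times> {..<20::nat} \<times> {..<48::nat}"
  define F where "F p = rel `` {W p}" for p
  have pg: "presented_group relators_G = UNIV // rel"
    unfolding presented_group_def rel_def ..
  have into: "F ` S \<subseteq> presented_group relators_G"
  proof
    fix z assume "z \<in> F ` S"
    then obtain p where "z = F p" by blast
    then show "z \<in> presented_group relators_G"
      unfolding pg F_def by (simp only: quotientI UNIV_I)
  qed
  have inj: "inj_on F S"
  proof (rule inj_onI)
    fix p q assume p: "p \<in> S" and q: "q \<in> S" and Fe: "F p = F q"
    have "W q \<in> F q" unfolding F_def rel_def by (auto intro: pres_eq.refl)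
    then have "W q \<in> F p" using Fe by simp
    then have "pres_eq relators_G (W p) (W q)" unfolding F_def rel_def by auto
    then have "phi (W p) = phi (W q)" by (rule sound)
    then show "p = q" using p q inj_chain unfolding S_def by (cases p; cases q) auto
  qed
  have "card S = 443520" unfolding S_def by (simp add: card_cartesian_product)
  moreover have "card S \<le> card (presented_group relators_G)"
    using card_inj_on_le[OF inj into fin] .
  ultimately show ?thesis by simp
qed

end
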